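(* For every integer $\ell\geq 3$, $$\mathfrak K(3\cdot 2^{\ell-2}+1)>\frac{5\cdot 2^{2\ell-3}}{3\cdot 2^{\ell-2}+1}\qquad\text{and}\qquad \mathfrak K(2^{\ell-1}+3)>\frac{2^{2\ell-2}}{2^{\ell-1}+3}.$$
   Context: The Thue–Morse word is $\mathbf t=\mathbf t_1\mathbf t_2\cdots$ where $\mathbf t_i\in\{0,1\}$ has the parity of the number of $1$'s in the binary expansion of $i-1$. For positive integers $\alpha\le\beta$, $\langle\alpha,\beta\rangle=\mathbf t_\alpha\cdots\mathbf t_\beta$. A $k$-anti-power is a word $w_1\cdots w_k$ with $w_1,\dots,w_k$ pairwise distinct words of equal length. For a positive integer $m$, $\mathfrak K(m)$ is the smallest positive integer $k$ such that the prefix $\langle 1,km\rangle$ of $\mathbf t$ is not a $k$-anti-power. *)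

theory Defs
  imports Complex_Main
begin

fun bitcount :: "nat \<Rightarrow> nat" where
  "bitcount n = (if n = 0 then 0 else n mod 2 + bitcount (n div 2))"

declare bitcount.simps [simp del]

text \<open>Thue--Morse word, 1-indexed: t_i = parity of the number of 1's in binary expansion of i-1.\<close>
definition tm :: "nat \<Rightarrow> nat" where
  "tm i = bitcount (i - 1) mod 2"

text \<open>Factor <alpha,beta> = t_alpha ... t_beta (empty if beta < alpha).\<close>
definition tm_factor :: "nat \<Rightarrow> nat \<Rightarrow> nat list" where
  "tm_factor a b = map tm [a..<Suc b]"

text \<open>The prefix <1,km> split into k consecutive blocks w_1..w_k of length m;
  it is a k-anti-power iff these blocks are pairwise distinct.\<close>
definition tm_prefix_antipower :: "nat \<Rightarrow> nat \<Rightarrow> bool" where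
  "tm_prefix_antipower k m \<longleftrightarrow>
     (\<forall>i<k. \<forall>j<k. i \<noteq> j \<longrightarrow> tm_factor (i*m + 1) ((i+1)*m) \<noteq> tm_factor (j*m + 1) ((j+1)*m))"

definition KK :: "nat \<Rightarrow> nat" where
  "KK m = (LEAST k. 0 < k \<and> \<not> tm_prefix_antipower k m)"

end

theory Submission
  imports Defs
begin

lemma bc0: "bitcount 0 = 0" by (simp add: bitcount.simps)

lemma bc2: "b < 2 \<Longrightarrow> bitcount (2*x + b) = b + bitcount x"
proof -
  assume b: "b < 2"
  show ?thesis
  proof (cases "2*x+b = 0")
    case True then have "x = 0" "b = 0" by auto
    then show ?thesis by (simp add: bc0)
  next
    case False
    have "bitcount (2*x+b) = (2*x+b) mod 2 + bitcount ((2*x+b) div 2)"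
      using False by (subst bitcount.simps) (simp add: bc0)
    also have "(2*x+b) mod 2 = b" using b by simp
    also have "(2*x+b) div 2 = x" using b by simp
    finally show ?thesis .
  qed
qed

definition Tb :: "nat \<Rightarrow> bool" where "Tb n = odd (bitcount n)"

lemma Tb_even: "Tb (2*n) = Tb n" using bc2[of 0 n] by (simp add: Tb_def)
lemma Tb_odd: "Tb (2*n+1) = (\<not> Tb n)" using bc2[of 1 n] by (simp add: Tb_def)

lemma bc_split: "R < 2^a \<Longrightarrow> bitcount (R + 2^a*v) = bitcount R + bitcount v"
proof (induction a arbitrary: R)
  case 0 then show ?case by (simp add: bc0)
next
  case (Suc a)
  have h: "R div 2 < 2^a" using Suc.prems by auto
  have e1: "R + 2^Suc a * v = 2*(R div 2 + 2^a*v) + R mod 2" by simp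
  have "bitcount (R + 2^Suc a * v) = R mod 2 + bitcount (R div 2 + 2^a*v)"
    by (subst e1, rule bc2) simp
  also have "... = R mod 2 + bitcount (R div 2) + bitcount v" using Suc.IH[OF h] by simp
  also have "R mod 2 + bitcount (R div 2) = bitcount R"
    using bc2[of "R mod 2" "R div 2"] by simp
  finally show ?case .
qed

lemma Tb_split: "R < 2^a \<Longrightarrow> Tb (R + 2^a*v) = (Tb R \<noteq> Tb v)"
  by (simp add: Tb_def bc_split)

lemma Tb_addmul: "Tb (M + 2^a*c) = (Tb (M mod 2^a) \<noteq> Tb (M div 2^a + c))"
proof -
  have "M + 2^a*c = M mod 2^a + 2^a*(M div 2^a + c)"
    by (simp add: algebra_simps)
  then show ?thesis using Tb_split[of "M mod 2^a" a] by simp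
qed

lemma Tb0: "\<not> Tb 0" by (simp add: Tb_def bc0)
lemma Tb1: "Tb 1" using Tb_odd[of 0] Tb0 by simp
lemma Tb2: "Tb 2" using Tb_even[of 1] Tb1 by simp
lemma Tb3: "\<not> Tb 3" using Tb_odd[of 1] Tb1 by simp
lemma Tb4: "Tb 4" using Tb_even[of 2] Tb2 by simp

definition eqf :: "nat \<Rightarrow> nat \<Rightarrow> nat \<Rightarrow> bool" where
  "eqf p q n = (\<forall>r<n. Tb (p+r) = Tb (q+r))"

lemma no_three: "\<not> (Tb b = Tb (b+1) \<and> Tb (b+1) = Tb (b+2))"
proof (cases "even b")
  case True
  then obtain c where "b = 2*c" by auto
  then show ?thesis using Tb_even[of c] Tb_odd[of c] by auto
next
  case False
  then obtain c where c: "b + 1 = 2*c" by (metis odd_Suc_div_two dvd_mult_div_cancel even_Suc Suc_eq_plus1 odd_two_times_div_two_succ)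
  have "b + 2 = 2*c+1" using c by simp
  then show ?thesis using Tb_even[of c] Tb_odd[of c] c by auto
qed

lemma par_aux:
  assumes p: "p = 2*a" and q: "q = 2*b+1"
  shows "\<not> (\<forall>r<4. Tb (p+r) = Tb (q+r))"
proof
  assume h: "\<forall>r<4. Tb (p+r) = Tb (q+r)"
  have h0: "Tb p = Tb q" using h[rule_format, of 0] by simp
  have h1: "Tb (p+1) = Tb (q+1)" using h[rule_format, of 1] by simp
  have h2: "Tb (p+2) = Tb (q+2)" using h[rule_format, of 2] by simp
  have h3: "Tb (p+3) = Tb (q+3)" using h[rule_format, of 3] by simp
  have e1: "p+1 = 2*a+1" "p+2 = 2*(a+1)" "p+3 = 2*(a+1)+1" using p by auto
  have e2: "q+1 = 2*(b+1)" "q+2 = 2*(b+1)+1" "q+3 = 2*(b+2)" using q by auto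
  have a0: "Tb p = Tb a" by (simp only: p Tb_even)
  have a1: "Tb (p+1) = (\<not> Tb a)" by (simp only: e1 Tb_odd)
  have a2: "Tb (p+2) = Tb (a+1)" by (simp only: e1 Tb_even)
  have a3: "Tb (p+3) = (\<not> Tb (a+1))" by (simp only: e1 Tb_odd)
  have b0: "Tb q = (\<not> Tb b)" by (simp only: q Tb_odd)
  have b1: "Tb (q+1) = Tb (b+1)" by (simp only: e2 Tb_even)
  have b2: "Tb (q+2) = (\<not> Tb (b+1))" by (simp only: e2 Tb_odd)
  have b3: "Tb (q+3) = Tb (b+2)" by (simp only: e2 Tb_even)
  have "Tb b = Tb (b+1) \<and> Tb (b+1) = Tb (b+2)"
    using h0 h1 h2 h3 a0 a1 a2 a3 b0 b1 b2 b3 by auto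
  then show False using no_three by blast
qed

lemma desub_par: "eqf p q n \<Longrightarrow> 4 \<le> n \<Longrightarrow> p mod 2 = q mod 2"
proof (rule ccontr)
  assume e: "eqf p q n" and n: "4 \<le> n" and ne: "p mod 2 \<noteq> q mod 2"
  have h: "\<forall>r<4. Tb (p+r) = Tb (q+r)" using e n unfolding eqf_def by auto
  show False
  proof (cases "even p")
    case True
    then have "odd q" using ne by (metis even_iff_mod_2_eq_zero odd_iff_mod_2_eq_one)
    then show False using par_aux[of p "p div 2" q "q div 2"] h True by auto
  next
    case False
    then have "even q" using ne by (metis even_iff_mod_2_eq_zero odd_iff_mod_2_eq_one)
    moreover have "\<forall>r<4. Tb (q+r) = Tb (p+r)" using h by auto
    ultimately show False using par_aux[of q "q div 2" p "p div 2"] False by auto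
  qed
qed


lemma desub_shift:
  assumes e: "eqf p q n" and pq: "p mod 2 = q mod 2"
  shows "eqf (p div 2) (q div 2) ((n+1) div 2)"
  unfolding eqf_def
proof (intro allI impI)
  fix s assume s: "s < (n+1) div 2"
  then have "2*s < n" by linarith
  then have h: "Tb (p + 2*s) = Tb (q + 2*s)" using e unfolding eqf_def by auto
  have ep: "p + 2*s = 2*(p div 2 + s) + p mod 2" by simp
  have eq: "q + 2*s = 2*(q div 2 + s) + p mod 2" using pq by simp
  show "Tb (p div 2 + s) = Tb (q div 2 + s)"
  proof (cases "p mod 2 = 1")
    case True
    then have "Tb (p + 2*s) = (\<not> Tb (p div 2 + s))" "Tb (q + 2*s) = (\<not> Tb (q div 2 + s))"
      using ep eq Tb_odd by metis+
    then show ?thesis using h by blast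
  next
    case False
    then have z: "p mod 2 = 0" by linarith
    then have "Tb (p + 2*s) = Tb (p div 2 + s)" "Tb (q + 2*s) = Tb (q div 2 + s)"
      using ep eq Tb_even by (metis add_0_right)+
    then show ?thesis using h by blast
  qed
qed

lemma iter: "eqf p q n \<Longrightarrow> 3*2^a+1 \<le> n \<Longrightarrow> p mod 2^(Suc a) = q mod 2^(Suc a)"
proof (induction a arbitrary: p q n)
  case 0
  then show ?case using desub_par by simp
next
  case (Suc a)
  have "(1::nat) \<le> 2^Suc a" by simp
  then have n4: "4 \<le> n" using Suc.prems(2) by linarith
  have par: "p mod 2 = q mod 2" using desub_par Suc.prems(1) n4 by blast
  have sh: "eqf (p div 2) (q div 2) ((n+1) div 2)" using desub_shift Suc.prems(1) par by blast
  have "6*2^a+1 \<le> n" using Suc.prems(2) by simp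
  then have "3*2^a + 1 \<le> (n+1) div 2" by linarith
  then have ih: "p div 2 mod 2^Suc a = q div 2 mod 2^Suc a" using Suc.IH sh by blast
  have "p mod 2^Suc (Suc a) = 2 * (p div 2 mod 2^Suc a) + p mod 2"
    using mod_mult2_eq[of p 2 "2^Suc a"] by (metis power_Suc)
  also have "... = 2 * (q div 2 mod 2^Suc a) + q mod 2" using ih par by simp
  also have "... = q mod 2^Suc (Suc a)"
    using mod_mult2_eq[of q 2 "2^Suc a"] by (metis power_Suc)
  finally show ?case .
qed


lemma Tb4k: "k < 4 \<Longrightarrow> Tb (k + 4*w) = (Tb k \<noteq> Tb w)"
  using Tb_split[of k 2 w] by simp

lemma TbE: "a = b \<Longrightarrow> Tb a = Tb b" by simp

lemma three: "\<exists>v. u \<le> v \<and> v \<le> u+2 \<and> Tb (v+3) = Tb v"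
proof -
  define w where "w = u div 4"
  define r0 where "r0 = u mod 4"
  have u: "u = r0 + 4*w" unfolding w_def r0_def by simp
  have r0: "r0 < 4" unfolding r0_def by simp
  have k0: "Tb (0 + 4*x) = Tb x" for x using Tb4k[of 0 x] Tb0 by simp
  have k1: "Tb (1 + 4*x) = (\<not> Tb x)" for x using Tb4k[of 1 x] Tb1 by simp
  have k2: "Tb (2 + 4*x) = (\<not> Tb x)" for x using Tb4k[of 2 x] Tb2 by simp
  have k3: "Tb (3 + 4*x) = Tb x" for x using Tb4k[of 3 x] Tb3 by simp
  consider "r0 = 0" | "r0 = 1" | "r0 = 2" | "r0 = 3" using r0 by linarith
  then show ?thesis
  proof cases
    case 1
    have "Tb u = Tb (0 + 4*w)" by (rule TbE) (simp add: u 1)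
    moreover have "Tb (u+3) = Tb (3 + 4*w)" by (rule TbE) (simp add: u 1)
    ultimately have "Tb (u+3) = Tb u" using k0[of w] k3[of w] by simp
    then show ?thesis by (intro exI[of _ u]) simp
  next
    case 2
    have "Tb u = Tb (1 + 4*w)" by (rule TbE) (simp add: u 2)
    then have a0: "Tb u = (\<not> Tb w)" using k1[of "w"] by simp
    have "Tb (u+1) = Tb (2 + 4*w)" by (rule TbE) (simp add: u 2)
    then have a1: "Tb (u+1) = (\<not> Tb w)" using k2[of "w"] by simp
    have "Tb (u+3) = Tb (0 + 4*(w+1))" by (rule TbE) (simp add: u 2)
    then have a3: "Tb (u+3) = Tb (w+1)" using k0[of "w+1"] by simp
    have "Tb (u+1+3) = Tb (1 + 4*(w+1))" by (rule TbE) (simp add: u 2)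
    then have a4: "Tb (u+1+3) = (\<not> Tb (w+1))" using k1[of "w+1"] by simp
    show ?thesis
    proof (cases "Tb (u+3) = Tb u")
      case True then show ?thesis by (intro exI[of _ u]) simp
    next
      case False
      then have "Tb (u+1+3) = Tb (u+1)" using a0 a1 a3 a4 by auto
      then show ?thesis by (intro exI[of _ "u+1"]) simp
    qed
  next
    case 3
    have "Tb u = Tb (2 + 4*w)" by (rule TbE) (simp add: u 3)
    then have a0: "Tb u = (\<not> Tb w)" using k2[of "w"] by simp
    have "Tb (u+1) = Tb (3 + 4*w)" by (rule TbE) (simp add: u 3)
    then have a1: "Tb (u+1) = Tb w" using k3[of "w"] by simp
    have "Tb (u+3) = Tb (1 + 4*(w+1))" by (rule TbE) (simp add: u 3)
    then have a3: "Tb (u+3) = (\<not> Tb (w+1))" using k1[of "w+1"] by simp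
    have "Tb (u+1+3) = Tb (2 + 4*(w+1))" by (rule TbE) (simp add: u 3)
    then have a4: "Tb (u+1+3) = (\<not> Tb (w+1))" using k2[of "w+1"] by simp
    show ?thesis
    proof (cases "Tb (u+3) = Tb u")
      case True then show ?thesis by (intro exI[of _ u]) simp
    next
      case False
      then have "Tb (u+1+3) = Tb (u+1)" using a0 a1 a3 a4 by auto
      then show ?thesis by (intro exI[of _ "u+1"]) simp
    qed
  next
    case 4
    have "Tb (u+1) = Tb (0 + 4*(w+1))" by (rule TbE) (simp add: u 4)
    then have a1: "Tb (u+1) = Tb (w+1)" using k0[of "w+1"] by simp
    have "Tb (u+1+3) = Tb (3 + 4*(w+1))" by (rule TbE) (simp add: u 4)
    then have a4: "Tb (u+1+3) = Tb (w+1)" using k3[of "w+1"] by simp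
    show ?thesis using a1 a4 by (intro exI[of _ "u+1"]) simp
  qed
qed

lemma pow2s: "(2::nat)^(2*s+1) = 2*2^s*2^s"
proof -
  have "(2::nat)^(2*s+1) = 2^(s+s)*2" by (simp add: mult_2)
  also have "... = 2*2^s*2^s" by (simp add: power_add)
  finally show ?thesis .
qed

lemma core1:
  fixes X :: nat
  assumes X: "X = 2^s" and m: "m = 3*X+1"
    and L: "p + (2*X)*m + m \<le> 10*X*X"
  shows "\<not> eqf p (p + (2*X)*m) m"
proof
  assume e: "eqf p (p + (2*X)*m) m"
  define A where "A = 2*X"
  have A: "A = 2^Suc s" unfolding A_def X by simp
  have Xp: "X > 0" using X by simp
  define u where "u = p div A"
  have Ap: "A > 0" using A by simp
  have lo: "A*u \<le> p" unfolding u_def by simp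
  have hi: "p < A*(u+1)"
  proof -
    have "p mod A < A" using Ap by simp
    moreover have "A*u + p mod A = p" unfolding u_def by simp
    ultimately show ?thesis by (simp add: distrib_left)
  qed
  obtain N where N1: "p \<le> N" and N2: "N < p + m" and N3: "even (N div A)"
  proof (cases "even u")
    case True then show ?thesis using that[of p] m u_def by simp
  next
    case False
    have "A*(u+1) div A = u+1" using Ap by simp
    moreover have "A*(u+1) < p + m" using lo m A_def by (simp add: algebra_simps)
    ultimately show ?thesis using that[of "A*(u+1)"] hi False by simp
  qed
  define r where "r = N - p"
  have "r < m" using N1 N2 r_def by simp
  then have "Tb (p + r) = Tb (p + (2*X)*m + r)" using e unfolding eqf_def by blast
  moreover have "p + r = N" using N1 r_def by simp
  moreover have "p + (2*X)*m + r = N + A*m" using N1 r_def A_def by simp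
  ultimately have t: "Tb N = Tb (N + A*m)" by simp
  define M where "M = N + A"
  have TN: "Tb N = (Tb (N mod A) \<noteq> Tb (N div A))" using Tb_addmul[of N "Suc s" 0] A by simp
  have TM: "Tb M = (Tb (N mod A) \<noteq> Tb (N div A + 1))" using Tb_addmul[of N "Suc s" 1] A M_def by simp
  obtain c where c: "N div A = 2*c" using N3 by auto
  have "Tb (N div A + 1) = (\<not> Tb (N div A))" using c Tb_odd Tb_even by simp
  then have MN: "Tb M \<noteq> Tb N" using TN TM by auto
  define B where "B = 2*X*X"
  have B: "B = 2^(2*s+1)" unfolding B_def X by (rule sym, rule pow2s)
  have Am: "A*m = M - N + 3*B" unfolding A_def M_def B_def m by (simp add: algebra_simps)
  have MB: "M < 2*B" using L N2 unfolding M_def A_def B_def m by (simp add: algebra_simps)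
  have TM2: "Tb (M + B*3) = (Tb (M mod B) \<noteq> Tb (M div B + 3))" using Tb_addmul[of M "2*s+1" 3] B by simp
  have TM1: "Tb M = (Tb (M mod B) \<noteq> Tb (M div B))" using Tb_addmul[of M "2*s+1" 0] B by simp
  have Bp: "B > 0" using B by simp
  have "M div B < 2" using MB Bp by (simp add: div_less_iff_less_mult mult.commute)
  then have "M div B = 0 \<or> M div B = 1" by linarith
  then have "Tb (M div B + 3) = Tb (M div B)" using Tb0 Tb1 Tb3 Tb4 by (auto simp: numeral_eq_Suc)
  then have "Tb (M + B*3) = Tb M" using TM1 TM2 by simp
  moreover have "N + A*m = M + B*3" using Am M_def by simp
  ultimately show False using t MN by simp
qed


lemma core2:
  fixes X :: nat
  assumes X: "X = 2^s" and m: "m = 2*X+3"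
    and L: "p + X*m + m \<le> 4*X*X"
  shows "\<not> eqf p (p + X*m) m"
proof
  assume e: "eqf p (p + X*m) m"
  have Xp: "X > 0" using X by simp
  define u where "u = p div X"
  have lo: "X*u \<le> p" unfolding u_def by simp
  have hi: "p < X*(u+1)"
  proof -
    have "p mod X < X" using Xp by simp
    moreover have "X*u + p mod X = p" unfolding u_def by simp
    ultimately show ?thesis by (simp add: distrib_left)
  qed
  obtain v where v1: "u \<le> v" and v2: "v \<le> u+2" and v3: "Tb (v+3) = Tb v" using three by blast
  obtain N where N1: "p \<le> N" and N2: "N < p + m" and N3: "N div X = v"
  proof (cases "v = u")
    case True then show ?thesis using that[of p] m u_def by simp
  next
    case False
    have "X*v div X = v" using Xp by simp
    moreover have "X*(u+1) \<le> X*v" using v1 False by (intro mult_le_mono2) simp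
    moreover have "X*v \<le> X*(u+2)" using v2 by (intro mult_le_mono2)
    moreover have "X*(u+2) < p + m" using lo m by (simp add: algebra_simps)
    ultimately show ?thesis using that[of "X*v"] hi by simp
  qed
  define r where "r = N - p"
  have "r < m" using N1 N2 r_def by simp
  then have "Tb (p + r) = Tb (p + X*m + r)" using e unfolding eqf_def by blast
  moreover have "p + r = N" using N1 r_def by simp
  moreover have "p + X*m + r = N + X*m" using N1 r_def by simp
  ultimately have t: "Tb N = Tb (N + X*m)" by simp
  define M where "M = N + X*3"
  have TN: "Tb N = (Tb (N mod X) \<noteq> Tb (N div X))" using Tb_addmul[of N s 0] X by simp
  have TM: "Tb M = (Tb (N mod X) \<noteq> Tb (N div X + 3))" using Tb_addmul[of N s 3] X M_def by simp
  have MN: "Tb M = Tb N" using TN TM N3 v3 by simp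
  define B where "B = 2*X*X"
  have B: "B = 2^(2*s+1)" unfolding B_def X by (rule sym, rule pow2s)
  have MB: "M < B" using L N2 unfolding M_def B_def m by (simp add: algebra_simps)
  have TM2: "Tb (M + B*1) = (Tb (M mod B) \<noteq> Tb (M div B + 1))" using Tb_addmul[of M "2*s+1" 1] B by simp
  have "M mod B = M" "M div B = 0" using MB by simp_all
  then have "Tb (M + B*1) = (\<not> Tb M)" using TM2 Tb1 by simp
  moreover have "N + X*m = M + B*1" unfolding M_def B_def m by (simp add: algebra_simps)
  ultimately show False using t MN by simp
qed

lemma dvd_step:
  assumes "i < j" "odd m" "(i*m) mod 2^c = (j*m) mod 2^c"
  shows "(2::nat)^c dvd (j - i)"
proof -
  have "i*m \<le> j*m" using assms(1) by simp
  then have "2^c dvd j*m - i*m" using assms(3) mod_eq_dvd_iff_nat by metis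
  then have "2^c dvd (j-i)*m" by (simp add: diff_mult_distrib)
  moreover have "coprime ((2::nat)^c) m" using assms(2) by simp
  ultimately show ?thesis using coprime_dvd_mult_left_iff by blast
qed

lemma blk_eqf:
  assumes "tm_factor (i*m+1) ((i+1)*m) = tm_factor (j*m+1) ((j+1)*m)"
  shows "eqf (i*m) (j*m) m"
  unfolding eqf_def
proof (intro allI impI)
  fix r assume r: "r < m"
  have a: "tm_factor (x*m+1) ((x+1)*m) ! r = tm (x*m+1+r)" for x
  proof -
    have l: "r < Suc ((x+1)*m) - (x*m+1)" using r by simp
    show ?thesis unfolding tm_factor_def using l by (simp del: upt_Suc add: nth_upt)
  qed
  have "tm (i*m+1+r) = tm (j*m+1+r)" using a[of i] a[of j] assms by simp
  then have "bitcount (i*m+r) mod 2 = bitcount (j*m+r) mod 2" by (simp add: tm_def)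
  then show "Tb (i*m+r) = Tb (j*m+r)" unfolding Tb_def by (simp add: odd_iff_mod_2_eq_one)
qed

lemma pigeon: "\<not> tm_prefix_antipower (2^m+1) m"
proof
  assume ap: "tm_prefix_antipower (2^m+1) m"
  define f where "f = (\<lambda>i. tm_factor (i*m+1) ((i+1)*m))"
  define S where "S = {xs. set xs \<subseteq> {0::nat,1} \<and> length xs = m}"
  have inj: "inj_on f {..<2^m+1}"
    using ap unfolding inj_on_def tm_prefix_antipower_def f_def by blast
  have tm01: "tm x \<in> {0,1}" for x by (auto simp: tm_def)
  have sub: "f ` {..<2^m+1} \<subseteq> S"
    unfolding S_def f_def tm_factor_def using tm01 by (auto simp del: upt_Suc) (metis neq0_conv)
  have fin: "finite S" unfolding S_def by (rule finite_lists_length_eq) simp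
  have cS: "card S = 2^m" unfolding S_def by (simp add: card_lists_length_eq numeral_2_eq_2)
  have "card {..<(2::nat)^m+1} \<le> card S" using card_inj_on_le[OF inj sub fin] .
  then show False using cS by simp
qed

lemma KK_gt:
  assumes "\<And>k. 0 < k \<Longrightarrow> k*m \<le> L \<Longrightarrow> tm_prefix_antipower k m"
  shows "L < KK m * m"
proof -
  have ex: "\<exists>k. 0 < k \<and> \<not> tm_prefix_antipower k m"
    using pigeon by (intro exI[of _ "2^m+1"]) simp
  have P: "0 < KK m \<and> \<not> tm_prefix_antipower (KK m) m"
    unfolding KK_def by (rule LeastI_ex[OF ex])
  show ?thesis using P assms[of "KK m"] by (meson not_le)
qed


lemma dist1:
  fixes X :: nat
  assumes s: "1 \<le> s" and X: "X = 2^s" and m: "m = 3*X+1"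
    and ij: "i < j" and jk: "j < k" and L: "k*m \<le> 10*X*X"
  shows "tm_factor (i*m+1) ((i+1)*m) \<noteq> tm_factor (j*m+1) ((j+1)*m)"
proof
  assume "tm_factor (i*m+1) ((i+1)*m) = tm_factor (j*m+1) ((j+1)*m)"
  then have e: "eqf (i*m) (j*m) m" by (rule blk_eqf)
  have "3*2^s+1 \<le> m" using m X by simp
  then have c: "(i*m) mod 2^Suc s = (j*m) mod 2^Suc s" using iter e by blast
  have "even X" using X s by (simp add: dvd_power_iff_le)
  then have om: "odd m" using m by simp
  have "2^Suc s dvd (j - i)" using dvd_step[OF ij om c] .
  then obtain t where t: "j - i = (2*X)*t" using X by auto
  have "t \<noteq> 0" using t ij by (metis mult_0_right zero_less_diff less_irrefl)
  have j1: "(j+1)*m \<le> k*m" using jk by (intro mult_le_mono1) simp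
  have "t = 1"
  proof (rule ccontr)
    assume "t \<noteq> 1"
    then have "2 \<le> t" using \<open>t \<noteq> 0\<close> by simp
    then have "(2*X)*2 \<le> (2*X)*t" by (intro mult_le_mono2)
    moreover have "(2*X)*t \<le> j" using t by (metis diff_le_self)
    ultimately have "4*X \<le> j" by linarith
    then have "(4*X)*m \<le> j*m" by (intro mult_le_mono1)
    moreover have "(4*X)*m = 12*X*X + 4*X" using m by (simp add: algebra_simps)
    moreover have "(j+1)*m = j*m + m" by simp
    ultimately show False using j1 L m by linarith
  qed
  then have jj: "j*m = i*m + (2*X)*m" using t ij by (metis add_diff_inverse_nat less_imp_le_nat not_le distrib_right mult_1_right)
  have "i*m + (2*X)*m + m \<le> 10*X*X" using j1 L jj by simp
  then have "\<not> eqf (i*m) (i*m + (2*X)*m) m" using core1[OF X m] by blast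
  then show False using e jj by simp
qed

lemma part1:
  fixes X :: nat
  assumes s: "1 \<le> s" and X: "X = 2^s" and m: "m = 3*X+1" and L: "k*m \<le> 10*X*X"
  shows "tm_prefix_antipower k m"
  unfolding tm_prefix_antipower_def
proof (intro allI impI)
  fix i j assume i: "i < k" and j: "j < k" and ne: "i \<noteq> j"
  show "tm_factor (i*m+1) ((i+1)*m) \<noteq> tm_factor (j*m+1) ((j+1)*m)"
  proof (cases "i < j")
    case True then show ?thesis using dist1[OF s X m True j L] by blast
  next
    case False then have "j < i" using ne by simp
    then show ?thesis using dist1[OF s X m _ i L] by metis
  qed
qed

lemma dist2:
  fixes X :: nat
  assumes s: "1 \<le> s" and X: "X = 2^s" and m: "m = 2*X+3"
    and ij: "i < j" and jk: "j < k" and L: "k*m \<le> 4*X*X"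
  shows "tm_factor (i*m+1) ((i+1)*m) \<noteq> tm_factor (j*m+1) ((j+1)*m)"
proof
  assume "tm_factor (i*m+1) ((i+1)*m) = tm_factor (j*m+1) ((j+1)*m)"
  then have e: "eqf (i*m) (j*m) m" by (rule blk_eqf)
  obtain s' where s': "s = Suc s'" using s by (cases s) auto
  have X2: "X = 2*2^s'" using X s' by simp
  have "3*2^s'+1 \<le> m" using m X2 by simp
  then have c: "(i*m) mod 2^Suc s' = (j*m) mod 2^Suc s'" using iter e by blast
  have om: "odd m" using m by simp
  have "2^Suc s' dvd (j - i)" using dvd_step[OF ij om c] .
  then obtain t where t: "j - i = X*t" using X s' by auto
  have "t \<noteq> 0" using t ij by (metis mult_0_right zero_less_diff less_irrefl)
  have j1: "(j+1)*m \<le> k*m" using jk by (intro mult_le_mono1) simp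
  have "t = 1"
  proof (rule ccontr)
    assume "t \<noteq> 1"
    then have "2 \<le> t" using \<open>t \<noteq> 0\<close> by simp
    then have "X*2 \<le> X*t" by (intro mult_le_mono2)
    moreover have "X*t \<le> j" using t by (metis diff_le_self)
    ultimately have "2*X \<le> j" by linarith
    then have "(2*X)*m \<le> j*m" by (intro mult_le_mono1)
    moreover have "(2*X)*m = 4*X*X + 6*X" using m by (simp add: algebra_simps)
    moreover have "(j+1)*m = j*m + m" by simp
    ultimately show False using j1 L m by linarith
  qed
  then have jj: "j*m = i*m + X*m" using t ij by (metis add_diff_inverse_nat less_imp_le_nat not_le distrib_right mult_1_right)
  have "i*m + X*m + m \<le> 4*X*X" using j1 L jj by simp
  then have "\<not> eqf (i*m) (i*m + X*m) m" using core2[OF X m] by blast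
  then show False using e jj by simp
qed

lemma part2:
  fixes X :: nat
  assumes s: "1 \<le> s" and X: "X = 2^s" and m: "m = 2*X+3" and L: "k*m \<le> 4*X*X"
  shows "tm_prefix_antipower k m"
  unfolding tm_prefix_antipower_def
proof (intro allI impI)
  fix i j assume i: "i < k" and j: "j < k" and ne: "i \<noteq> j"
  show "tm_factor (i*m+1) ((i+1)*m) \<noteq> tm_factor (j*m+1) ((j+1)*m)"
  proof (cases "i < j")
    case True then show ?thesis using dist2[OF s X m True j L] by blast
  next
    case False then have "j < i" using ne by simp
    then show ?thesis using dist2[OF s X m _ i L] by metis
  qed
qed


theorem lemma9:
  fixes l :: nat
  assumes "l \<ge> 3"
  shows "real (KK (3 * 2^(l-2) + 1)) > 5 * 2^(2*l-3) / (3 * 2^(l-2) + 1)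
       \<and> real (KK (2^(l-1) + 3)) > 2^(2*l-2) / (2^(l-1) + 3)"
proof -
  obtain s where ls: "l = s + 2" and s: "1 \<le> s" using assms by (intro that[of "l-2"]) simp_all
  define X :: nat where "X = 2^s"
  have e1: "(2::real)^(2*l-3) = 2*real X*real X"
  proof -
    have "2*l-3 = 2*s+1" using ls by simp
    moreover have "real ((2::nat)^(2*s+1)) = real (2*2^s*2^s)" by (simp only: pow2s)
    ultimately show ?thesis unfolding X_def by simp
  qed
  have e2: "(2::real)^(l-2) = real X" unfolding X_def using ls by simp
  have e3: "(2::real)^(l-1) = 2*real X" unfolding X_def using ls by simp
  have e4: "(2::real)^(2*l-2) = 4*real X*real X"
  proof -
    have "2*l-2 = Suc (2*s+1)" using ls by simp
    then have "(2::real)^(2*l-2) = 2*2^(2*s+1)" by simp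
    also have "real ((2::nat)^(2*s+1)) = real (2*2^s*2^s)" by (simp only: pow2s)
    then have "(2::real)^(2*s+1) = 2*real X*real X" unfolding X_def by simp
    finally show ?thesis by simp
  qed
  define m1 where "m1 = 3*X+1"
  have A1: "10*X*X < KK m1 * m1"
    by (rule KK_gt, rule part1[OF s X_def m1_def])
  define m2 where "m2 = 2*X+3"
  have A2: "4*X*X < KK m2 * m2"
    by (rule KK_gt, rule part2[OF s X_def m2_def])
  have B1: "real (10*X*X) < real (KK m1) * real m1" using A1 by (simp only: of_nat_less_iff of_nat_mult[symmetric])
  have B2: "real (4*X*X) < real (KK m2) * real m2" using A2 by (simp only: of_nat_less_iff of_nat_mult[symmetric])
  have m1r: "(3 * 2^(l-2) + 1 :: real) = real m1" unfolding m1_def using e2 by simp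
  have m1n: "(3 * 2^(l-2) + 1 :: nat) = m1" unfolding m1_def X_def using ls by simp
  have m2r: "(2^(l-1) + 3 :: real) = real m2" unfolding m2_def using e3 by simp
  have m2n: "(2^(l-1) + 3 :: nat) = m2" unfolding m2_def X_def using ls by simp
  have p1: "real m1 > 0" unfolding m1_def by simp
  have p2: "real m2 > 0" unfolding m2_def by simp
  have "5 * 2^(2*l-3) / (3 * 2^(l-2) + 1) < real (KK (3 * 2^(l-2) + 1))"
    unfolding m1r m1n e1 using B1 p1 by (simp add: pos_divide_less_eq)
  moreover have "2^(2*l-2) / (2^(l-1) + 3) < real (KK (2^(l-1) + 3))"
    unfolding m2r m2n e4 using B2 p2 by (simp add: pos_divide_less_eq)
  ultimately show ?thesis by simp
qed

end
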